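(* Assume the standing setting of the context and let $\Pi:]0,\infty[\to\mathbb R$ be a Borel measurable function satisfying Assumptions (A3), (A2), (A1). Let $\nu>0$. 1) If in (A1) $0<x_{1l}<x_{2r}=\infty$, then $\lim_{x\to\infty}x^{d_1-d_2}\int_\nu^x s^{-d_1-1}\Pi(s)\,ds=0$. 2) If in (A1) $0=x_{1l}<x_{2r}<\infty$, then $\lim_{x\downarrow0}x^{d_2-d_1}\int_x^\nu s^{-d_2-1}\Pi(s)\,ds=0$.
   Context: Fix $r,\alpha\in\mathbb R$, $\sigma\ne0$. $X$ is the geometric Brownian motion $dX(t)=\alpha X(t)dt+\sigma X(t)dW(t)$, $X(0)=x>0$, $W$ a standard Brownian motion; $E_x$ is expectation given $X(0)=x$. $d_1=\frac{(\sigma^2/2-\alpha)-\sqrt{(\sigma^2/2-\alpha)^2+2\sigma^2 r}}{\sigma^2}$, $d_2=\frac{(\sigma^2/2-\alpha)+\sqrt{(\sigma^2/2-\alpha)^2+2\sigma^2 r}}{\sigma^2}$ are the roots of $P(d)=\frac{\sigma^2}{2}d^2+(\alpha-\frac{\sigma^2}{2})d-r$, assumed real with $d_1<d_2$. $f^+=\max(f,0)$. Assumption (A3): $\Pi$ locally integrable on $]0,\infty[$. Assumption (A2): $E_x\left[\int_0^\infty e^{-rs}\Pi^+(X(s))ds\right]<\infty$ for all $x>0$. Assumption (A1): there are $x_{1l}\le x_{1r}<x_{2l}\le x_{2r}$, with either $0\le x_{1l}$ and $x_{2r}<\infty$, or $0<x_{1l}$ and $x_{2r}\le\infty$, such that $\Pi>0$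 on $]x_{1r},x_{2l}[$, $\Pi=0$ on $[x_{1l},x_{1r}]\cup[x_{2l},x_{2r}]$, $\Pi<0$ on $]0,x_{1l}[\cup]x_{2r},\infty[$. *)

theory Defs
  imports "HOL-Probability.Probability"
begin

definition brownian_motion :: "'a measure \<Rightarrow> (real \<Rightarrow> 'a \<Rightarrow> real) \<Rightarrow> bool" where
  "brownian_motion M W \<longleftrightarrow>
     prob_space M \<and>
     (\<forall>t\<ge>0. W t \<in> borel_measurable M) \<and>
     (\<forall>\<omega>\<in>space M. W 0 \<omega> = 0) \<and>
     (\<forall>\<omega>\<in>space M. continuous_on {0..} (\<lambda>t. W t \<omega>)) \<and>
     (\<forall>s t. 0 \<le> s \<and> s < t \<longrightarrow>
        distributed M lborel (\<lambda>\<omega>. W t \<omega> - W s \<omega>)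
          (\<lambda>y. ennreal (normal_density 0 (sqrt (t - s)) y))) \<and>
     (\<forall>(ts :: nat \<Rightarrow> real) n. 0 \<le> ts 0 \<and> (\<forall>i<n. ts i < ts (Suc i)) \<longrightarrow>
        prob_space.indep_vars M (\<lambda>_. borel) (\<lambda>i \<omega>. W (ts (Suc i)) \<omega> - W (ts i) \<omega>) {..<n})"

text \<open>Geometric Brownian motion started at x: the (unique strong) solution of
  dX = \<alpha> X dt + \<sigma> X dW, X(0) = x.\<close>
definition gbm :: "real \<Rightarrow> real \<Rightarrow> (real \<Rightarrow> 'a \<Rightarrow> real) \<Rightarrow> real \<Rightarrow> real \<Rightarrow> 'a \<Rightarrow> real" where
  "gbm \<alpha> \<sigma> W x t \<omega> = x * exp ((\<alpha> - \<sigma>\<^sup>2 / 2) * t + \<sigma> * W t \<omega>)"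

definition d1 :: "real \<Rightarrow> real \<Rightarrow> real \<Rightarrow> real" where
  "d1 r \<alpha> \<sigma> = ((\<sigma>\<^sup>2/2 - \<alpha>) - sqrt ((\<sigma>\<^sup>2/2 - \<alpha>)\<^sup>2 + 2 * \<sigma>\<^sup>2 * r)) / \<sigma>\<^sup>2"

definition d2 :: "real \<Rightarrow> real \<Rightarrow> real \<Rightarrow> real" where
  "d2 r \<alpha> \<sigma> = ((\<sigma>\<^sup>2/2 - \<alpha>) + sqrt ((\<sigma>\<^sup>2/2 - \<alpha>)\<^sup>2 + 2 * \<sigma>\<^sup>2 * r)) / \<sigma>\<^sup>2"

definition A3 :: "(real \<Rightarrow> real) \<Rightarrow> bool" where
  "A3 Pf \<longleftrightarrow> (\<forall>a b. 0 < a \<and> a \<le> b \<longrightarrow> set_integrable lborel {a..b} Pf)"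

definition A2 :: "'a measure \<Rightarrow> (real \<Rightarrow> 'a \<Rightarrow> real) \<Rightarrow> real \<Rightarrow> real \<Rightarrow> real \<Rightarrow> (real \<Rightarrow> real) \<Rightarrow> bool" where
  "A2 M W r \<alpha> \<sigma> Pf \<longleftrightarrow> (\<forall>x>0.
     (\<integral>\<^sup>+\<omega>. (\<integral>\<^sup>+s\<in>{0..}. ennreal (exp (- r * s) * max 0 (Pf (gbm \<alpha> \<sigma> W x s \<omega>))) \<partial>lborel) \<partial>M) < \<infinity>)"

definition A1 :: "(real \<Rightarrow> real) \<Rightarrow> real \<Rightarrow> real \<Rightarrow> real \<Rightarrow> ereal \<Rightarrow> bool" where
  "A1 Pf x1l x1r x2l x2r \<longleftrightarrow>
     x1l \<le> x1r \<and> x1r < x2l \<and> ereal x2l \<le> x2r \<and>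
     ((0 \<le> x1l \<and> x2r < \<infinity>) \<or> (0 < x1l \<and> x2r \<le> \<infinity>)) \<and>
     (\<forall>x. x1r < x \<and> x < x2l \<longrightarrow> Pf x > 0) \<and>
     (\<forall>x>0. (x1l \<le> x \<and> x \<le> x1r) \<or> (x2l \<le> x \<and> ereal x \<le> x2r) \<longrightarrow> Pf x = 0) \<and>
     (\<forall>x>0. x < x1l \<or> x2r < ereal x \<longrightarrow> Pf x < 0)"

end

theory Submission
  imports Defs
begin


lemma ident_aux:
  fixes q p s \<mu> \<sigma> :: real
  assumes "\<sigma> \<noteq> 0" "s > 0"
  shows "- ((q*q - \<mu>\<^sup>2) / (2*\<sigma>\<^sup>2)) * s - ((- (p * q) - \<mu> * s) / \<sigma>)\<^sup>2 / (2 * s) = - ((- \<mu> - q) / \<sigma>\<^sup>2) * (- (p * q)) - (q*q) / (2 * \<sigma>\<^sup>2) * (s - p)\<^sup>2 / s"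
  using assms by (simp add: field_simps power2_eq_square)

lemma kernel_lb:
  fixes \<sigma> \<mu> r D A w :: real
  assumes s0: "\<sigma> \<noteq> 0" and Dd: "D = \<mu>\<^sup>2 + 2 * \<sigma>\<^sup>2 * r" and Dp: "D > 0"
    and Ad: "A = D / (2 * \<sigma>\<^sup>2)"
    and wle: "w \<le> - (2 * \<sigma>\<^sup>2 / sqrt D)"
  shows "ennreal (exp (-1) / (\<bar>\<sigma>\<bar> * sqrt (4 * pi * A)) * exp (- ((- \<mu> - sqrt D) / \<sigma>\<^sup>2) * w))
     \<le> (\<integral>\<^sup>+s. ennreal (indicator {0<..} s * exp (- r * s) * normal_density 0 (sqrt s) ((w - \<mu> * s) / \<sigma>) / \<bar>\<sigma>\<bar>) \<partial>lborel)"
proof -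
  define a where "a = (- \<mu> - sqrt D) / \<sigma>\<^sup>2"
  define L where "L = - w"
  define s0 where "s0 = L / sqrt D"
  define t where "t = sqrt (s0 / A)"
  have sD: "sqrt D > 0" using Dp by simp
  have sDD: "sqrt D * sqrt D = D" using Dp by simp
  have sig2: "\<sigma>\<^sup>2 > 0" using s0 by simp
  have Apos: "A > 0" using Ad Dp sig2 by simp
  have Lpos: "L \<ge> 2 * \<sigma>\<^sup>2 / sqrt D" using wle L_def by simp
  have L0: "L > 0" using Lpos sig2 sD by (smt (verit) divide_pos_pos)
  have s0pos: "s0 > 0" using L0 sD s0_def by simp
  have As0: "A * s0 = L * sqrt D / (2 * \<sigma>\<^sup>2)"
  proof -
    have "A * s0 * (2 * \<sigma>\<^sup>2) = D * s0" using Ad sig2 by simp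
    also have "\<dots> = sqrt D * (s0 * sqrt D)" by (metis sDD mult.commute mult.assoc)
    also have "s0 * sqrt D = L" using sD s0_def by simp
    finally show ?thesis using sig2 by (simp add: field_simps)
  qed
  have As0ge: "A * s0 \<ge> 1"
  proof -
    have "L * sqrt D \<ge> 2 * \<sigma>\<^sup>2" using Lpos sD by (simp add: field_simps)
    then show ?thesis using As0 sig2 by simp
  qed
  have tpos: "t > 0" using t_def s0pos Apos by simp
  have tt: "t * t = s0 / A" using t_def s0pos Apos by simp
  have tle: "t \<le> s0"
  proof -
    have "s0 / A \<le> s0 * s0" using As0ge Apos s0pos by (simp add: field_simps)
    then have "t * t \<le> s0 * s0" using tt by simp
    then show ?thesis using tpos s0pos power2_le_imp_le[of t s0] by (simp add: power2_eq_square)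
  qed
  define c1 where "c1 = exp (- a * w - 1) / (sqrt (4 * pi * s0) * \<bar>\<sigma>\<bar>)"
  have c1nn: "c1 \<ge> 0" unfolding c1_def using s0pos by (intro divide_nonneg_pos mult_pos_pos) (auto simp: s0)
  have pt: "c1 \<le> indicator {0<..} s * exp (- r * s) * normal_density 0 (sqrt s) ((w - \<mu> * s) / \<sigma>) / \<bar>\<sigma>\<bar>"
    if s: "s \<in> {s0..s0+t}" for s
  proof -
    have spos: "s > 0" using s s0pos by simp
    have ex: "- r * s - ((w - \<mu> * s) / \<sigma>)\<^sup>2 / (2 * s) = - a * w - A * (s - s0)\<^sup>2 / s"
    proof -
      have r: "r = (sqrt D * sqrt D - \<mu>\<^sup>2) / (2*\<sigma>\<^sup>2)" using sDD Dd sig2 by (simp add: field_simps)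
      have w: "w = - (s0 * sqrt D)" using s0_def L_def sD by simp
      have A: "A = sqrt D * sqrt D / (2*\<sigma>\<^sup>2)" using Ad sDD by simp
      show ?thesis unfolding a_def using ident_aux[where q="sqrt D" and p=s0 and \<mu>=\<mu>, OF s0 spos] r w A by simp
    qed
    have b1: "A * (s - s0)\<^sup>2 / s \<le> 1"
    proof -
      have "(s - s0)\<^sup>2 \<le> t * t" using s s0pos tpos by (simp add: power2_eq_square mult_mono)
      then have "A * (s - s0)\<^sup>2 \<le> A * (s0 / A)" using tt Apos by (intro mult_left_mono) auto
      also have "\<dots> = s0" using Apos by simp
      also have "\<dots> \<le> s" using s by simp
      finally show ?thesis using spos by simp
    qed
    define X where "X = ((w - \<mu> * s) / \<sigma>)\<^sup>2 / (2 * s)"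
    have ex': "- r * s - X = - a * w - A * (s - s0)\<^sup>2 / s" using ex unfolding X_def by simp
    have "- a * w - 1 \<le> - r * s + (- X)" using ex' b1 by linarith
    then have "exp (- a * w - 1) \<le> exp (- r * s + (- X))" by simp
    also have "\<dots> = exp (- r * s) * exp (- X)" by (rule exp_add)
    also have "- X = - ((w - \<mu> * s) / \<sigma>)\<^sup>2 / (2 * s)" unfolding X_def by simp
    finally have e1: "exp (- a * w - 1) \<le> exp (- r * s) * exp (- ((w - \<mu> * s) / \<sigma>)\<^sup>2 / (2 * s))" .
    have nd: "normal_density 0 (sqrt s) z = exp (- z\<^sup>2 / (2 * s)) / sqrt (2 * pi * s)" for z
      using spos by (simp add: normal_density_def)
    have sq: "sqrt (2 * pi * s) \<le> sqrt (4 * pi * s0)" using s tle by simp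
    have sqp: "sqrt (2 * pi * s) > 0" using spos by simp
    have "c1 \<le> exp (- a * w - 1) / (sqrt (2 * pi * s) * \<bar>\<sigma>\<bar>)"
      unfolding c1_def using sq sqp s0 s0pos by (intro divide_left_mono mult_mono mult_pos_pos) auto
    also have "\<dots> \<le> exp (- r * s) * exp (- ((w - \<mu> * s) / \<sigma>)\<^sup>2 / (2 * s)) / (sqrt (2 * pi * s) * \<bar>\<sigma>\<bar>)"
      using e1 sqp s0 by (simp add: divide_right_mono)
    also have "\<dots> = indicator {0<..} s * exp (- r * s) * normal_density 0 (sqrt s) ((w - \<mu> * s) / \<sigma>) / \<bar>\<sigma>\<bar>"
      using spos by (simp add: nd)
    finally show ?thesis .
  qed
  have "ennreal (c1 * t) = (\<integral>\<^sup>+s. ennreal c1 * indicator {s0..s0+t} s \<partial>lborel)"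
    using tpos c1nn by (simp add: nn_integral_cmult_indicator ennreal_mult)
  also have "\<dots> \<le> (\<integral>\<^sup>+s. ennreal (indicator {0<..} s * exp (- r * s) * normal_density 0 (sqrt s) ((w - \<mu> * s) / \<sigma>) / \<bar>\<sigma>\<bar>) \<partial>lborel)"
  proof (intro nn_integral_mono)
    fix s :: real
    show "ennreal c1 * indicator {s0..s0+t} s \<le> ennreal (indicator {0<..} s * exp (- r * s) * normal_density 0 (sqrt s) ((w - \<mu> * s) / \<sigma>) / \<bar>\<sigma>\<bar>)"
    proof (cases "s \<in> {s0..s0+t}")
      case True
      then show ?thesis using ennreal_leI[OF pt[OF True]] by simp
    qed simp
  qed
  finally have main: "ennreal (c1 * t) \<le> \<dots>" .
  have "c1 * t = exp (-1) / (\<bar>\<sigma>\<bar> * sqrt (4 * pi * A)) * exp (- a * w)"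
  proof -
    have "t / sqrt (4 * pi * s0) = 1 / sqrt (4 * pi * A)"
      unfolding t_def using s0pos Apos by (simp add: real_sqrt_divide real_sqrt_mult field_simps)
    note td = this
    have sp: "sqrt (4 * pi * s0) > 0" using s0pos by simp
    have "c1 * t = exp (- a * w - 1) / \<bar>\<sigma>\<bar> * (t / sqrt (4 * pi * s0))"
      unfolding c1_def using sp s0 by (simp add: field_simps)
    also have "\<dots> = exp (- a * w - 1) / \<bar>\<sigma>\<bar> * (1 / sqrt (4 * pi * A))" by (simp only: td)
    also have "exp (- a * w - 1) = exp (-1) * exp (- a * w)" by (simp add: exp_add[symmetric])
    finally show ?thesis by simp
  qed
  then show ?thesis using main a_def by simp
qed



lemma W_joint_meas:
  assumes BM: "brownian_motion M W"
  shows "(\<lambda>(\<omega>, s). W (max 0 s) \<omega>) \<in> borel_measurable (M \<Otimes>\<^sub>M lborel)"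
proof -
  have Wm: "W t \<in> borel_measurable M" if "t \<ge> 0" for t using BM that unfolding brownian_motion_def by auto
  have Wc: "continuous_on {0..} (\<lambda>t. W t \<omega>)" if "\<omega> \<in> space M" for \<omega>
    using BM that unfolding brownian_motion_def by auto
  define Wn where "Wn n = (\<lambda>(\<omega>::'a, s::real). W (max 0 (of_int \<lfloor>real (Suc n) * s\<rfloor> / real (Suc n))) \<omega>)" for n
  have meas: "Wn n \<in> borel_measurable (M \<Otimes>\<^sub>M lborel)" for n
  proof -
    have "(\<lambda>x. (\<lambda>k x. W (max 0 (of_int k / real (Suc n))) (fst x)) (\<lfloor>real (Suc n) * snd x\<rfloor>) x) \<in> borel_measurable (M \<Otimes>\<^sub>M lborel)"
    proof (rule measurable_compose_countable'[where I=UNIV and f="\<lambda>k x. W (max 0 (of_int k / real (Suc n))) (fst x)" and g="\<lambda>x. \<lfloor>real (Suc n) * snd x\<rfloor>"])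
      fix k :: int
      show "(\<lambda>x. W (max 0 (of_int k / real (Suc n))) (fst x)) \<in> borel_measurable (M \<Otimes>\<^sub>M lborel)"
        using Wm[of "max 0 (of_int k / real (Suc n))"] by (intro measurable_compose[OF measurable_fst]) simp_all
    next
      show "(\<lambda>x. \<lfloor>real (Suc n) * snd x\<rfloor>) \<in> measurable (M \<Otimes>\<^sub>M lborel) (count_space UNIV)"
        by measurable
    qed simp
    then show ?thesis unfolding Wn_def by (simp add: case_prod_beta)
  qed
  show ?thesis
  proof (rule borel_measurable_LIMSEQ_real[OF _ meas])
    fix x :: "'a \<times> real" assume x: "x \<in> space (M \<Otimes>\<^sub>M lborel)"
    obtain \<omega> and s :: real where xs: "x = (\<omega>, s)" by (cases x)
    have om: "\<omega> \<in> space M" using x xs by (simp add: space_pair_measure)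
    define tn where "tn n = max 0 (of_int \<lfloor>real (Suc n) * s\<rfloor> / real (Suc n))" for n
    have tn_lim: "tn \<longlonglongrightarrow> max 0 s"
    proof -
      have "(\<lambda>n. of_int \<lfloor>real (Suc n) * s\<rfloor> / real (Suc n)) \<longlonglongrightarrow> s"
      proof (rule tendsto_sandwich[of "\<lambda>n. s - 1 / real (Suc n)" _ _ "\<lambda>n. s"])
        show "\<forall>\<^sub>F n in sequentially. s - 1 / real (Suc n) \<le> of_int \<lfloor>real (Suc n) * s\<rfloor> / real (Suc n)"
        proof (intro always_eventually allI)
          fix n
          have h: "real (Suc n) * s - 1 \<le> of_int \<lfloor>real (Suc n) * s\<rfloor>" by linarith
          have "s - 1 / real (Suc n) = (real (Suc n) * s - 1) / real (Suc n)"
            by (simp add: field_simps)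
          also have "\<dots> \<le> of_int \<lfloor>real (Suc n) * s\<rfloor> / real (Suc n)"
            using h by (intro divide_right_mono) auto
          finally show "s - 1 / real (Suc n) \<le> of_int \<lfloor>real (Suc n) * s\<rfloor> / real (Suc n)" .
        qed
        show "\<forall>\<^sub>F n in sequentially. of_int \<lfloor>real (Suc n) * s\<rfloor> / real (Suc n) \<le> s"
        proof (intro always_eventually allI)
          fix n
          have h: "of_int \<lfloor>real (Suc n) * s\<rfloor> \<le> real (Suc n) * s" by linarith
          have "of_int \<lfloor>real (Suc n) * s\<rfloor> / real (Suc n) \<le> (real (Suc n) * s) / real (Suc n)"
            using h by (intro divide_right_mono) auto
          also have "\<dots> = s" by simp
          finally show "of_int \<lfloor>real (Suc n) * s\<rfloor> / real (Suc n) \<le> s" .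
        qed
        have "(\<lambda>n. 1 / real (Suc n)) \<longlonglongrightarrow> 0" using LIMSEQ_Suc[OF lim_const_over_n[of 1]] by simp
        then show "(\<lambda>n. s - 1 / real (Suc n)) \<longlonglongrightarrow> s" using tendsto_diff[of "\<lambda>_. s" s sequentially] by fastforce
      qed simp
      then show ?thesis unfolding tn_def by (intro tendsto_max) auto
    qed
    have "(\<lambda>n. W (tn n) \<omega>) \<longlonglongrightarrow> W (max 0 s) \<omega>"
      by (rule continuous_on_tendsto_compose[OF Wc[OF om] tn_lim]) (auto simp: tn_def)
    then show "(\<lambda>i. Wn i x) \<longlonglongrightarrow> (\<lambda>(\<omega>, s). W (max 0 s) \<omega>) x"
      unfolding Wn_def xs tn_def by simp
  qed
qed

lemma A2_bound:
  fixes r \<alpha> \<sigma> :: real and Pf :: "real \<Rightarrow> real"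
  assumes BM: "brownian_motion M W" and Pm[measurable]: "Pf \<in> borel_measurable borel"
    and A2: "A2 M W r \<alpha> \<sigma> Pf" and s0: "\<sigma> \<noteq> 0"
  shows "(\<integral>\<^sup>+w. (\<integral>\<^sup>+s. ennreal (indicator {0<..} s * exp (- r * s) * normal_density 0 (sqrt s) ((w - (\<alpha> - \<sigma>\<^sup>2/2) * s) / \<sigma>) / \<bar>\<sigma>\<bar>) \<partial>lborel) * ennreal (max 0 (Pf (exp w))) \<partial>lborel) < \<infinity>"
proof -
  define \<mu> where "\<mu> = \<alpha> - \<sigma>\<^sup>2/2"
  have prob: "prob_space M" using BM unfolding brownian_motion_def by auto
  interpret prob_space M by (rule prob)
  have psf: "pair_sigma_finite M lborel"
    unfolding pair_sigma_finite_def using sigma_finite_lborel sigma_finite_measure_axioms by auto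
  define Q where "Q w = max 0 (Pf (exp w))" for w
  have Qm[measurable]: "Q \<in> borel_measurable borel" unfolding Q_def by measurable
  have Qnn: "Q w \<ge> 0" for w unfolding Q_def by simp
  define WW where "WW = (\<lambda>(\<omega>, s). W (max 0 s) \<omega>)"
  have WWm[measurable]: "WW \<in> borel_measurable (M \<Otimes>\<^sub>M lborel)" unfolding WW_def by (rule W_joint_meas[OF BM])
  define F where "F = (\<lambda>x. ennreal (exp (- r * snd x) * Q (\<mu> * snd x + \<sigma> * WW x)) * indicator {0..} (snd x))"
  have Fm: "F \<in> borel_measurable (M \<Otimes>\<^sub>M lborel)" unfolding F_def by measurable
  define k where "k s w = indicator {0<..} s * exp (- r * s) * normal_density 0 (sqrt s) ((w - \<mu> * s) / \<sigma>) / \<bar>\<sigma>\<bar>" for s w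
  have knn: "k s w \<ge> 0" for s w unfolding k_def by (simp add: normal_density_nonneg)
  define H where "H s w = ennreal (k s w) * ennreal (Q w)" for s w
  have Hm: "(\<lambda>(s, w). H s w) \<in> borel_measurable (lborel \<Otimes>\<^sub>M lborel)"
    unfolding H_def k_def normal_density_def by measurable
  have Hm1: "H s \<in> borel_measurable borel" for s
    unfolding H_def k_def normal_density_def by measurable
  have km: "(\<lambda>s. k s w) \<in> borel_measurable lborel" for w
    unfolding k_def normal_density_def by measurable
  have I_fin: "(\<integral>\<^sup>+\<omega>. (\<integral>\<^sup>+s\<in>{0..}. ennreal (exp (- r * s) * max 0 (Pf (gbm \<alpha> \<sigma> W 1 s \<omega>))) \<partial>lborel) \<partial>M) < \<infinity>"
    using A2 unfolding A2_def by auto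
  have I_eq: "(\<integral>\<^sup>+\<omega>. (\<integral>\<^sup>+s\<in>{0..}. ennreal (exp (- r * s) * max 0 (Pf (gbm \<alpha> \<sigma> W 1 s \<omega>))) \<partial>lborel) \<partial>M)
      = (\<integral>\<^sup>+\<omega>. (\<integral>\<^sup>+s. F (\<omega>, s) \<partial>lborel) \<partial>M)"
    by (intro nn_integral_cong) (auto simp: F_def WW_def Q_def gbm_def \<mu>_def split: split_indicator)
  also have "\<dots> = (\<integral>\<^sup>+s. (\<integral>\<^sup>+\<omega>. F (\<omega>, s) \<partial>M) \<partial>lborel)"
    using pair_sigma_finite.Fubini[OF psf Fm] by simp
  also have "\<dots> \<ge> (\<integral>\<^sup>+s. (\<integral>\<^sup>+w. H s w \<partial>lborel) \<partial>lborel)"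
  proof (intro nn_integral_mono)
    fix s :: real
    show "(\<integral>\<^sup>+w. H s w \<partial>lborel) \<le> (\<integral>\<^sup>+\<omega>. F (\<omega>, s) \<partial>M)"
    proof (cases "s > 0")
      case False
      then have "H s w = 0" for w unfolding H_def k_def by simp
      then show ?thesis by simp
    next
      case True
      have dist: "distributed M lborel (\<lambda>\<omega>. W s \<omega> - W 0 \<omega>) (\<lambda>y. ennreal (normal_density 0 (sqrt (s - 0)) y))"
      proof -
        have "\<forall>s t. 0 \<le> s \<and> s < t \<longrightarrow> distributed M lborel (\<lambda>\<omega>. W t \<omega> - W s \<omega>) (\<lambda>y. ennreal (normal_density 0 (sqrt (t - s)) y))"
          using BM unfolding brownian_motion_def by blast
        then show ?thesis using True by blast
      qed
      define G where "G z = ennreal (exp (- r * s) * Q (\<mu> * s + \<sigma> * z))" for z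
      have Gm: "G \<in> borel_measurable lborel" unfolding G_def by measurable
      have "(\<integral>\<^sup>+\<omega>. F (\<omega>, s) \<partial>M) = (\<integral>\<^sup>+\<omega>. G (W s \<omega> - W 0 \<omega>) \<partial>M)"
        using BM True unfolding brownian_motion_def
        by (intro nn_integral_cong) (auto simp: F_def WW_def G_def)
      also have "\<dots> = (\<integral>\<^sup>+z. ennreal (normal_density 0 (sqrt s) z) * G z \<partial>lborel)"
        using distributed_nn_integral[OF dist, of G] Gm by simp
      finally have LHS: "(\<integral>\<^sup>+\<omega>. F (\<omega>, s) \<partial>M) = (\<integral>\<^sup>+z. ennreal (normal_density 0 (sqrt s) z) * G z \<partial>lborel)" .
      have "(\<integral>\<^sup>+w. H s w \<partial>lborel) = ennreal \<bar>\<sigma>\<bar> * (\<integral>\<^sup>+z. H s (\<mu> * s + \<sigma> * z) \<partial>lborel)"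
        by (rule nn_integral_real_affine[OF Hm1 s0])
      also have "(\<integral>\<^sup>+z. H s (\<mu> * s + \<sigma> * z) \<partial>lborel) = (\<integral>\<^sup>+z. ennreal (1 / \<bar>\<sigma>\<bar>) * (ennreal (normal_density 0 (sqrt s) z) * G z) \<partial>lborel)"
      proof (intro nn_integral_cong)
        fix z
        have "H s (\<mu> * s + \<sigma> * z) = ennreal (1 / \<bar>\<sigma>\<bar> * (normal_density 0 (sqrt s) z * (exp (- r * s) * Q (\<mu> * s + \<sigma> * z))))"
          unfolding H_def k_def using True s0 Qnn
          by (subst ennreal_mult[symmetric]) (auto simp: field_simps normal_density_nonneg)
        also have "\<dots> = ennreal (1 / \<bar>\<sigma>\<bar>) * (ennreal (normal_density 0 (sqrt s) z) * G z)"
        proof -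
          have a: "0 \<le> 1 / \<bar>\<sigma>\<bar>" by simp
          have b: "0 \<le> normal_density 0 (sqrt s) z" by (simp add: normal_density_nonneg)
          have c: "0 \<le> exp (- r * s) * Q (\<mu> * s + \<sigma> * z)" using Qnn by simp
          show ?thesis
            by (simp only: G_def ennreal_mult[OF a mult_nonneg_nonneg[OF b c]] ennreal_mult[OF b c])
        qed
        finally show "H s (\<mu> * s + \<sigma> * z) = ennreal (1 / \<bar>\<sigma>\<bar>) * (ennreal (normal_density 0 (sqrt s) z) * G z)" .
      qed
      also have "\<dots> = ennreal (1 / \<bar>\<sigma>\<bar>) * (\<integral>\<^sup>+z. ennreal (normal_density 0 (sqrt s) z) * G z \<partial>lborel)"
        by (rule nn_integral_cmult) (unfold G_def normal_density_def, measurable)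
      finally have "(\<integral>\<^sup>+w. H s w \<partial>lborel) = (ennreal \<bar>\<sigma>\<bar> * ennreal (1 / \<bar>\<sigma>\<bar>)) * (\<integral>\<^sup>+z. ennreal (normal_density 0 (sqrt s) z) * G z \<partial>lborel)"
        by (simp add: mult.assoc)
      also have "ennreal \<bar>\<sigma>\<bar> * ennreal (1 / \<bar>\<sigma>\<bar>) = 1"
        using s0 by (subst ennreal_mult[symmetric]) auto
      finally show ?thesis using LHS by simp
    qed
  qed
  also have "(\<integral>\<^sup>+s. (\<integral>\<^sup>+w. H s w \<partial>lborel) \<partial>lborel) = (\<integral>\<^sup>+w. (\<integral>\<^sup>+s. H s w \<partial>lborel) \<partial>lborel)"
    using lborel_pair.Fubini'[OF Hm] by simp
  also have "\<dots> = (\<integral>\<^sup>+w. (\<integral>\<^sup>+s. ennreal (k s w) \<partial>lborel) * ennreal (Q w) \<partial>lborel)"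
    unfolding H_def by (intro nn_integral_cong nn_integral_multc) (use km in measurable)
  finally show ?thesis using I_fin unfolding k_def Q_def \<mu>_def by (simp add: top.not_eq_extremum le_less_trans)
qed



lemma tail_nn_bound:
  fixes r \<alpha> \<sigma> :: real and Pf :: "real \<Rightarrow> real"
  assumes BM: "brownian_motion M W" and Pm[measurable]: "Pf \<in> borel_measurable borel"
    and A2: "A2 M W r \<alpha> \<sigma> Pf" and s0: "\<sigma> \<noteq> 0" and Dp: "(\<sigma>\<^sup>2/2 - \<alpha>)\<^sup>2 + 2 * \<sigma>\<^sup>2 * r > 0"
  shows "\<exists>w0 Bn. \<forall>x c. 0 < x \<longrightarrow> x \<le> c \<longrightarrow> ln c \<le> w0 \<longrightarrow>
     (\<integral>\<^sup>+y. ennreal (y powr (- d1 r \<alpha> \<sigma> - 1) * max 0 (Pf y)) * indicator {x..c} y \<partial>lborel) \<le> ennreal Bn"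
proof -
  define \<mu> where "\<mu> = \<alpha> - \<sigma>\<^sup>2/2"
  define D where "D = (\<sigma>\<^sup>2/2 - \<alpha>)\<^sup>2 + 2 * \<sigma>\<^sup>2 * r"
  define A where "A = D / (2 * \<sigma>\<^sup>2)"
  define a where "a = d1 r \<alpha> \<sigma>"
  have Dd: "D = \<mu>\<^sup>2 + 2 * \<sigma>\<^sup>2 * r" unfolding D_def \<mu>_def by (simp add: power2_eq_square algebra_simps)
  have Dpos: "D > 0" using Dp D_def by simp
  have a_eq: "a = (- \<mu> - sqrt D) / \<sigma>\<^sup>2" unfolding a_def d1_def D_def \<mu>_def by simp
  define w0 where "w0 = - (2 * \<sigma>\<^sup>2 / sqrt D)"
  define C where "C = exp (-1) / (\<bar>\<sigma>\<bar> * sqrt (4 * pi * A))"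
  have Cpos: "C > 0" using s0 Dpos unfolding C_def A_def by simp
  define Q where "Q w = max 0 (Pf (exp w))" for w
  have Qnn: "Q w \<ge> 0" for w unfolding Q_def by simp
  define k where "k s w = indicator {0<..} s * exp (- r * s) * normal_density 0 (sqrt s) ((w - \<mu> * s) / \<sigma>) / \<bar>\<sigma>\<bar>" for s w
  have fin: "(\<integral>\<^sup>+w. (\<integral>\<^sup>+s. ennreal (k s w) \<partial>lborel) * ennreal (Q w) \<partial>lborel) < \<infinity>"
    using A2_bound[OF BM Pm A2 s0] unfolding k_def Q_def \<mu>_def .
  have kl: "ennreal (C * exp (- a * w)) \<le> (\<integral>\<^sup>+s. ennreal (k s w) \<partial>lborel)" if "w \<le> w0" for w
    using kernel_lb[where w=w, OF s0 Dd Dpos A_def] that unfolding w0_def C_def k_def a_eq by simp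
  define J where "J = (\<integral>\<^sup>+w. ennreal (exp (- a * w) * Q w) * indicator {..w0} w \<partial>lborel)"
  have Jm: "(\<lambda>w. ennreal (exp (- a * w) * Q w) * indicator {..w0} w) \<in> borel_measurable lborel"
    unfolding Q_def by measurable
  have "ennreal C * J = (\<integral>\<^sup>+w. ennreal C * (ennreal (exp (- a * w) * Q w) * indicator {..w0} w) \<partial>lborel)"
    unfolding J_def by (rule nn_integral_cmult[OF Jm, symmetric])
  also have "\<dots> \<le> (\<integral>\<^sup>+w. (\<integral>\<^sup>+s. ennreal (k s w) \<partial>lborel) * ennreal (Q w) \<partial>lborel)"
  proof (intro nn_integral_mono)
    fix w :: real
    show "ennreal C * (ennreal (exp (- a * w) * Q w) * indicator {..w0} w) \<le> (\<integral>\<^sup>+s. ennreal (k s w) \<partial>lborel) * ennreal (Q w)"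
    proof (cases "w \<le> w0")
      case True
      have "ennreal C * (ennreal (exp (- a * w) * Q w) * indicator {..w0} w) = ennreal (C * exp (- a * w)) * ennreal (Q w)"
        using True Cpos Qnn[of w] by (simp add: ennreal_mult[symmetric] mult.assoc)
      also have "\<dots> \<le> (\<integral>\<^sup>+s. ennreal (k s w) \<partial>lborel) * ennreal (Q w)"
        by (intro mult_right_mono kl True) simp
      finally show ?thesis .
    qed simp
  qed
  finally have "ennreal C * J < \<infinity>" using fin by (simp add: le_less_trans)
  then have Jfin: "J < \<infinity>" using Cpos by (auto simp: ennreal_mult_less_top)
  show ?thesis
  proof (intro exI allI impI)
    fix x c :: real assume x: "0 < x" and xc: "x \<le> c" and cw: "ln c \<le> w0"
    define h where "h y = y powr (- a - 1) * max 0 (Pf y)" for y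
    have lnle: "ln x \<le> ln c" using x xc by simp
    have hm: "set_borel_measurable borel {exp (ln x)..exp (ln c)} h"
      unfolding set_borel_measurable_def h_def by measurable
    have sub: "(\<integral>\<^sup>+y. h y * indicator {exp (ln x)..exp (ln c)} y \<partial>lborel) =
             (\<integral>\<^sup>+w. h (exp w) * exp w * indicator {ln x..ln c} w \<partial>lborel)"
      by (rule nn_integral_substitution[where g=exp and g'=exp and a="ln x" and b="ln c", OF hm]) (auto intro!: DERIV_exp continuous_intros simp: lnle)
    have "(\<integral>\<^sup>+y. ennreal (y powr (- d1 r \<alpha> \<sigma> - 1) * max 0 (Pf y)) * indicator {x..c} y \<partial>lborel)
        = (\<integral>\<^sup>+y. h y * indicator {exp (ln x)..exp (ln c)} y \<partial>lborel)"
      using x xc by (intro nn_integral_cong) (auto simp: h_def a_def split: split_indicator)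
    also have "\<dots> = (\<integral>\<^sup>+w. h (exp w) * exp w * indicator {ln x..ln c} w \<partial>lborel)" by (rule sub)
    also have "\<dots> \<le> J"
      unfolding J_def
    proof (intro nn_integral_mono)
      fix w :: real
      show "ennreal (h (exp w) * exp w * indicator {ln x..ln c} w) \<le> ennreal (exp (- a * w) * Q w) * indicator {..w0} w"
      proof (cases "w \<in> {ln x..ln c}")
        case True
        then have "w \<le> w0" using cw by simp
        moreover have "h (exp w) * exp w = exp (- a * w) * Q w"
        proof -
          have "exp w powr (- a - 1) * exp w = exp (w * (- a - 1) + w)"
            by (simp add: exp_powr_real exp_add)
          also have "w * (- a - 1) + w = - a * w" by (simp add: algebra_simps)
          finally show ?thesis unfolding h_def Q_def by (simp add: mult_ac)
        qed
        ultimately show ?thesis using True by simp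
      qed simp
    qed
    also have "J = ennreal (enn2real J)" using Jfin by simp
    finally show "(\<integral>\<^sup>+y. ennreal (y powr (- d1 r \<alpha> \<sigma> - 1) * max 0 (Pf y)) * indicator {x..c} y \<partial>lborel) \<le> ennreal (enn2real J)" .
  qed
qed



lemma integ_powr:
  fixes Pf :: "real \<Rightarrow> real"
  assumes A3: "A3 Pf" and Pm[measurable]: "Pf \<in> borel_measurable borel" and x: "0 < x" and xc: "x \<le> c"
  shows "set_integrable lborel {x..c} (\<lambda>y. y powr p * Pf y)"
proof (rule set_integrable_bound[where f="\<lambda>y. (x powr p + c powr p) * Pf y"])
  have "set_integrable lborel {x..c} Pf" using A3 x xc unfolding A3_def by auto
  then show "set_integrable lborel {x..c} (\<lambda>y. (x powr p + c powr p) * Pf y)" by simp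
  show "set_borel_measurable lborel {x..c} (\<lambda>y. y powr p * Pf y)"
    unfolding set_borel_measurable_def by measurable
  show "AE y in lborel. y \<in> {x..c} \<longrightarrow> norm (y powr p * Pf y) \<le> norm ((x powr p + c powr p) * Pf y)"
  proof (intro AE_I2 impI)
    fix y assume y: "y \<in> {x..c}"
    have "y powr p \<le> x powr p + c powr p"
    proof (cases "p \<ge> 0")
      case True
      then have "y powr p \<le> c powr p" using y x by (intro powr_mono2) auto
      moreover have "0 \<le> x powr p" by simp
      ultimately show ?thesis by linarith
    next
      case False
      then have "y powr p \<le> x powr p" using y x by (intro powr_mono2') auto
      moreover have "0 \<le> c powr p" by simp
      ultimately show ?thesis by linarith
    qed
    then have "\<bar>y powr p\<bar> \<le> \<bar>x powr p + c powr p\<bar>" by simp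
    then show "norm (y powr p * Pf y) \<le> norm ((x powr p + c powr p) * Pf y)"
      by (simp add: abs_mult mult_right_mono)
  qed
qed

lemma split_int:
  fixes \<phi> :: "real \<Rightarrow> real"
  assumes i: "set_integrable lborel {x..c} \<phi>" and "x \<le> \<delta>" "\<delta> \<le> c"
  shows "(LINT y:{x..c}|lborel. \<phi> y) = (LINT y:{x..<\<delta>}|lborel. \<phi> y) + (LINT y:{\<delta>..c}|lborel. \<phi> y)"
proof -
  have e: "{x..c} = {x..<\<delta>} \<union> {\<delta>..c}" using assms by auto
  have i1: "set_integrable lborel {x..<\<delta>} \<phi>" by (rule set_integrable_subset[OF i]) (use assms in auto)
  have i2: "set_integrable lborel {\<delta>..c} \<phi>" by (rule set_integrable_subset[OF i]) (use assms in auto)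
  show ?thesis unfolding e by (rule set_integral_Un[OF _ i1 i2]) auto
qed

lemma sint_nonneg:
  fixes \<phi> :: "real \<Rightarrow> real"
  assumes "\<And>y. y \<in> A \<Longrightarrow> 0 \<le> \<phi> y"
  shows "0 \<le> (LINT y:A|M. \<phi> y)"
  unfolding set_lebesgue_integral_def
  by (intro integral_nonneg_AE AE_I2) (use assms in \<open>simp split: split_indicator\<close>)

theorem proposition5:
  fixes r \<alpha> \<sigma> \<nu> x1l x1r x2l :: real and x2r :: ereal
    and M :: "'a measure" and W :: "real \<Rightarrow> 'a \<Rightarrow> real" and Pf :: "real \<Rightarrow> real"
  assumes "\<sigma> \<noteq> 0"
    and "(\<sigma>\<^sup>2/2 - \<alpha>)\<^sup>2 + 2 * \<sigma>\<^sup>2 * r > 0"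
    and "brownian_motion M W"
    and "Pf \<in> borel_measurable borel"
    and "A3 Pf"
    and "A2 M W r \<alpha> \<sigma> Pf"
    and "A1 Pf x1l x1r x2l x2r"
    and "\<nu> > 0"
  shows "(0 < x1l \<and> x2r = \<infinity> \<longrightarrow>
           ((\<lambda>x. x powr (d1 r \<alpha> \<sigma> - d2 r \<alpha> \<sigma>) *
                 (LBINT s=ereal \<nu>..ereal x. s powr (- d1 r \<alpha> \<sigma> - 1) * Pf s)) \<longlongrightarrow> 0) at_top)
       \<and> (0 = x1l \<and> x2r < \<infinity> \<longrightarrow>
           ((\<lambda>x. x powr (d2 r \<alpha> \<sigma> - d1 r \<alpha> \<sigma>) *
                 (LBINT s=ereal x..ereal \<nu>. s powr (- d2 r \<alpha> \<sigma> - 1) * Pf s)) \<longlongrightarrow> 0) (at_right 0))"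
proof -
  define a where "a = d1 r \<alpha> \<sigma>"
  define b where "b = d2 r \<alpha> \<sigma>"
  define D where "D = (\<sigma>\<^sup>2/2 - \<alpha>)\<^sup>2 + 2 * \<sigma>\<^sup>2 * r"
  have Dpos: "D > 0" using assms(2) D_def by simp
  have sig2: "\<sigma>\<^sup>2 > 0" using assms(1) by simp
  have ab: "a < b"
  proof -
    have "b - a = 2 * sqrt D / \<sigma>\<^sup>2" unfolding a_def b_def d1_def d2_def D_def
      by (simp add: diff_divide_distrib[symmetric])
    moreover have "sqrt D > 0" using Dpos by simp
    ultimately show ?thesis using sig2 by (smt (verit) divide_pos_pos)
  qed
  note A1 = assms(7)[unfolded A1_def]
  have Pm[measurable]: "Pf \<in> borel_measurable borel" by (rule assms(4))
  show ?thesis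
  proof (intro conjI impI)
    assume h: "0 < x1l \<and> x2r = \<infinity>"
    have x2lpos: "x2l > 0" using h A1 by linarith
    have zero: "Pf s = 0" if "s \<ge> x2l" for s
      using A1 that x2lpos h by auto
    define K where "K = max \<nu> x2l"
    define Cst where "Cst = (LBINT s=ereal \<nu>..ereal K. s powr (- a - 1) * Pf s)"
    have ev: "\<forall>\<^sub>F x in at_top. x powr (a - b) * Cst = x powr (d1 r \<alpha> \<sigma> - d2 r \<alpha> \<sigma>) *
                 (LBINT s=ereal \<nu>..ereal x. s powr (- d1 r \<alpha> \<sigma> - 1) * Pf s)"
    proof (rule eventually_at_top_linorderI[of K])
      fix x assume x: "x \<ge> K"
      have "(LBINT s=ereal \<nu>..ereal x. s powr (- a - 1) * Pf s) = (LINT s:{\<nu>..x}|lborel. s powr (- a - 1) * Pf s)"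
        using x by (intro interval_integral_Icc) (simp add: K_def)
      also have "\<dots> = (LINT s:{\<nu>..K}|lborel. s powr (- a - 1) * Pf s)"
        unfolding set_lebesgue_integral_def
      proof (intro Bochner_Integration.integral_cong refl)
        fix s
        show "indicator {\<nu>..x} s *\<^sub>R (s powr (- a - 1) * Pf s) = indicator {\<nu>..K} s *\<^sub>R (s powr (- a - 1) * Pf s)"
          using x zero[of s] by (cases "s \<le> K") (auto simp: K_def split: split_indicator)
      qed
      also have "\<dots> = Cst" unfolding Cst_def by (intro interval_integral_Icc[symmetric]) (simp add: K_def)
      finally show "x powr (a - b) * Cst = x powr (d1 r \<alpha> \<sigma> - d2 r \<alpha> \<sigma>) *
                 (LBINT s=ereal \<nu>..ereal x. s powr (- d1 r \<alpha> \<sigma> - 1) * Pf s)" unfolding a_def b_def by simp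
    qed
    have "((\<lambda>x. x powr (a - b) * Cst) \<longlongrightarrow> 0 * Cst) at_top"
      using ab by (intro tendsto_mult tendsto_const tendsto_neg_powr filterlim_ident) simp
    then have "((\<lambda>x. x powr (a - b) * Cst) \<longlongrightarrow> 0) at_top" by simp
    then show "((\<lambda>x. x powr (d1 r \<alpha> \<sigma> - d2 r \<alpha> \<sigma>) *
                 (LBINT s=ereal \<nu>..ereal x. s powr (- d1 r \<alpha> \<sigma> - 1) * Pf s)) \<longlongrightarrow> 0) at_top"
      using ev by (rule Lim_transform_eventually)
  next
    assume h: "0 = x1l \<and> x2r < \<infinity>"
    have x2lpos: "x2l > 0" using h A1 by linarith
    have Pnn: "Pf y \<ge> 0" if "0 < y" "y < x2l" for y
    proof (cases "y \<le> x1r")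
      case True
      then have "Pf y = 0" using A1 h that by auto
      then show ?thesis by simp
    next
      case False
      then have "Pf y > 0" using A1 that by auto
      then show ?thesis by simp
    qed
    obtain w0 Bn where WB: "\<forall>x c. 0 < x \<longrightarrow> x \<le> c \<longrightarrow> ln c \<le> w0 \<longrightarrow>
     (\<integral>\<^sup>+y. ennreal (y powr (- d1 r \<alpha> \<sigma> - 1) * max 0 (Pf y)) * indicator {x..c} y \<partial>lborel) \<le> ennreal Bn"
      using tail_nn_bound[OF assms(3) assms(4) assms(6) assms(1) assms(2)] by blast
    define c where "c = min (min \<nu> (x2l/2)) (exp w0)"
    have c0: "c > 0" using assms(8) x2lpos by (simp add: c_def)
    have c\<nu>: "c \<le> \<nu>" and cx2: "c < x2l" using x2lpos by (auto simp: c_def)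
    have cw: "ln c \<le> w0"
    proof -
      have "c \<le> exp w0" by (simp add: c_def)
      then have "ln c \<le> ln (exp w0)" using c0 by (subst ln_le_cancel_iff) auto
      then show ?thesis by simp
    qed
    define g where "g y = y powr (- a - 1) * Pf y" for y
    define f where "f y = y powr (- b - 1) * Pf y" for y
    define Gs where "Gs x = (LINT y:{x..c}|lborel. g y)" for x
    have gint: "set_integrable lborel {x..c} g" if "0 < x" "x \<le> c" for x
      unfolding g_def using integ_powr[OF assms(5) Pm that] .
    have gnn: "g y \<ge> 0" if "0 < y" "y \<le> c" for y
      unfolding g_def using Pnn[of y] that cx2 by simp
    have Gb: "Gs x \<le> max 0 Bn" if x: "0 < x" "x \<le> c" for x
    proof -
      have "ennreal (Gs x) = (\<integral>\<^sup>+y. ennreal (indicator {x..c} y *\<^sub>R g y) \<partial>lborel)"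
        unfolding Gs_def set_lebesgue_integral_def
        using gint[OF x] gnn x
        by (intro nn_integral_eq_integral[symmetric] AE_I2) (auto simp: set_integrable_def split: split_indicator)
      also have "\<dots> = (\<integral>\<^sup>+y. ennreal (y powr (- d1 r \<alpha> \<sigma> - 1) * max 0 (Pf y)) * indicator {x..c} y \<partial>lborel)"
        using Pnn x cx2 by (intro nn_integral_cong) (auto simp: g_def a_def split: split_indicator)
      also have "\<dots> \<le> ennreal Bn" using WB x cw by auto
      finally show ?thesis by (auto simp: ennreal_le_iff2)
    qed
    define S where "S = Sup (Gs ` {0<..c})"
    have bdd: "bdd_above (Gs ` {0<..c})" using Gb by (auto intro!: bdd_aboveI[of _ "max 0 Bn"])
    have ne: "Gs ` {0<..c} \<noteq> {}" using c0 by auto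
    have GS: "Gs x \<le> S" if "0 < x" "x \<le> c" for x
      unfolding S_def using bdd that by (intro cSup_upper) auto
    show "((\<lambda>x. x powr (d2 r \<alpha> \<sigma> - d1 r \<alpha> \<sigma>) *
                 (LBINT s=ereal x..ereal \<nu>. s powr (- d2 r \<alpha> \<sigma> - 1) * Pf s)) \<longlongrightarrow> 0) (at_right 0)"
    proof (rule tendstoI)
      fix \<epsilon> :: real assume \<epsilon>: "\<epsilon> > 0"
      have "S - \<epsilon>/2 < Sup (Gs ` {0<..c})" using \<epsilon> unfolding S_def by simp
      then obtain \<delta> where \<delta>: "\<delta> \<in> {0<..c}" and \<delta>S: "S - \<epsilon>/2 < Gs \<delta>"
        using less_cSup_iff[OF ne bdd] by auto
      define C\<delta> where "C\<delta> = (LINT y:{\<delta>..\<nu>}|lborel. f y)"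
      have evp: "\<forall>\<^sub>F x in at_right (0::real). 0 \<le> x" by (auto simp: eventually_at_right_field intro!: exI[of _ 1])
      have "((\<lambda>x. x powr (b - a) * C\<delta>) \<longlongrightarrow> 0 * C\<delta>) (at_right 0)"
        using ab evp by (intro tendsto_mult tendsto_const tendsto_zero_powrI[of "\<lambda>x. x" _ "\<lambda>_. b - a" "b - a"] tendsto_ident_at) auto
      then have ev1: "\<forall>\<^sub>F x in at_right 0. \<bar>x powr (b - a) * C\<delta>\<bar> < \<epsilon>/2"
        using \<epsilon> by (auto dest!: tendstoD[where e="\<epsilon>/2"] simp: dist_real_def)
      have ev2: "\<forall>\<^sub>F x in at_right 0. 0 < x \<and> x < \<delta>"
        using \<delta> by (auto simp: eventually_at_right_field intro!: exI[of _ \<delta>])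
      show "\<forall>\<^sub>F x in at_right 0. dist (x powr (d2 r \<alpha> \<sigma> - d1 r \<alpha> \<sigma>) *
                 (LBINT s=ereal x..ereal \<nu>. s powr (- d2 r \<alpha> \<sigma> - 1) * Pf s)) 0 < \<epsilon>"
        using ev1 ev2
      proof eventually_elim
        case (elim x)
        then have x0: "0 < x" and x\<delta>: "x < \<delta>" and small: "\<bar>x powr (b - a) * C\<delta>\<bar> < \<epsilon>/2" by auto
        have \<delta>c: "\<delta> \<le> c" and \<delta>0: "0 < \<delta>" using \<delta> by auto
        have fint: "set_integrable lborel {x..\<nu>} f"
          unfolding f_def by (rule integ_powr[OF assms(5) Pm x0]) (use x\<delta> \<delta>c c\<nu> in auto)
        define T where "T = (LINT y:{x..<\<delta>}|lborel. f y)"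
        have I1: "(LBINT s=ereal x..ereal \<nu>. s powr (- d2 r \<alpha> \<sigma> - 1) * Pf s) = T + C\<delta>"
        proof -
          have "(LBINT s=ereal x..ereal \<nu>. s powr (- d2 r \<alpha> \<sigma> - 1) * Pf s) = (LINT y:{x..\<nu>}|lborel. f y)"
            using x\<delta> \<delta>c c\<nu> by (subst interval_integral_Icc) (auto simp: f_def[abs_def] b_def)
          also have "\<dots> = T + C\<delta>" unfolding C\<delta>_def T_def
            by (rule split_int[OF fint]) (use x\<delta> \<delta>c c\<nu> in auto)
          finally show ?thesis .
        qed
        have T0: "0 \<le> T" unfolding T_def f_def
          by (rule sint_nonneg) (use Pnn x0 \<delta>c cx2 in auto)
        have Tle: "x powr (b - a) * T \<le> (LINT y:{x..<\<delta>}|lborel. g y)"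
        proof -
          have "x powr (b - a) * T = (LINT y:{x..<\<delta>}|lborel. x powr (b - a) * f y)" unfolding T_def by simp
          also have "\<dots> \<le> (LINT y:{x..<\<delta>}|lborel. g y)"
          proof (rule set_integral_mono)
            have "set_integrable lborel {x..<\<delta>} f"
              by (rule set_integrable_subset[OF fint]) (use x\<delta> \<delta>c c\<nu> in auto)
            then show "set_integrable lborel {x..<\<delta>} (\<lambda>y. x powr (b - a) * f y)" by simp
            show "set_integrable lborel {x..<\<delta>} g"
              by (rule set_integrable_subset[OF gint[OF x0]]) (use x\<delta> \<delta>c in auto)
          next
            fix y assume y: "y \<in> {x..<\<delta>}"
            then have y0: "0 < y" using x0 by auto
            have P0: "0 \<le> Pf y" using Pnn y y0 \<delta>c cx2 by auto
            have "x powr (b - a) \<le> y powr (b - a)" using y x0 ab by (intro powr_mono2) auto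
            then have "x powr (b - a) * (y powr (- b - 1) * Pf y) \<le> y powr (b - a) * (y powr (- b - 1) * Pf y)"
              using P0 by (intro mult_right_mono) auto
            also have "\<dots> = (y powr (b - a) * y powr (- b - 1)) * Pf y" by (simp only: mult.assoc)
            also have "y powr (b - a) * y powr (- b - 1) = y powr (- a - 1)"
            proof -
              have "y powr (b - a) * y powr (- b - 1) = y powr ((b - a) + (- b - 1))" by (rule powr_add[symmetric])
              also have "(b - a) + (- b - 1) = - a - 1" by simp
              finally show ?thesis .
            qed
            finally show "x powr (b - a) * f y \<le> g y" unfolding f_def g_def by simp
          qed
          finally show ?thesis .
        qed
        have Tg: "(LINT y:{x..<\<delta>}|lborel. g y) < \<epsilon>/2"
        proof -
          have "Gs x = (LINT y:{x..<\<delta>}|lborel. g y) + Gs \<delta>" unfolding Gs_def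
            by (rule split_int[OF gint[OF x0]]) (use x\<delta> \<delta>c in auto)
          moreover have "Gs x \<le> S" using GS x0 x\<delta> \<delta>c by auto
          ultimately show ?thesis using \<delta>S by linarith
        qed
        have "x powr (d2 r \<alpha> \<sigma> - d1 r \<alpha> \<sigma>) * (LBINT s=ereal x..ereal \<nu>. s powr (- d2 r \<alpha> \<sigma> - 1) * Pf s)
            = x powr (b - a) * T + x powr (b - a) * C\<delta>" using I1 unfolding a_def b_def by (simp add: distrib_left)
        moreover have "0 \<le> x powr (b - a) * T" using T0 by simp
        ultimately show ?case using Tle Tg small by (simp add: dist_real_def)
      qed
    qed
  qed
qed


end
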